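(* In the general large financial market setting described in the context, (NAA1) holds if and only if (NUPBR) holds.
   Context: Let $(\Omega,\mathcal{F},(\mathcal{F}_t)_{t\in[0,1]},P)$ be a filtered probability space satisfying the usual conditions. Let $\mathbb{S}$ be the space of real-valued semimartingales on $[0,1]$ starting at $0$, with the Emery topology given by the metric $d_{\mathbb{S}}(X,Y)=\sup_{K}E[\sup_{t\leq 1}|(K\bullet(X-Y))_t|\wedge 1]$, supremum over simple predictable $K$ with $\|K\|_\infty\le 1$. Let $I\subseteq[0,\infty)$ and for each $n\ge1$ let $\mathcal{A}^n$ be a family of subsets of $I$ with exactly $n$ elements, such that $A^1,A^2\in\bigcup_{n}\mathcal{A}^n$ implies $A^1\cup A^2\in\bigcup_{n}\mathcal{A}^n$. For each $A\in\bigcup_n\mathcal{A}^n$ let $\mathcal{X}^A_1\subset\mathbb{S}$ be a convex set of semimartingales starting at $0$ with $X_t\ge -1$ for all $t$, satisfying: for all bounded predictable $H,G\ge0$ with $HG=0$ and $X,Y\in\mathcal{X}^A_1$ with $Z=(H\bullet X)+(G\bullet Y)\ge -1$, one has $Z\in\mathcal{X}^A_1$; and $A^1\subseteq A^2$ implies $\mathcal{X}^{A^1}_1\subset\mathcal{X}^{A^2}_1$. Set $\mathcal{X}^n_1=\bigcup_{A\in\mathcal{A}^n}\mathcal{X}^A_1$, $\mathcal{X}_1$ = Emery closure of $\bigcup_{n}\mathcal{X}^n_1$, and $K^1_0=\{X_1:X\in\mathcal{X}_1\}$. An asymptotic arbitrage of the first kind (AA1) exists if there are $\alpha>0$, sequences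 $\varepsilon_k\to0$ ($\varepsilon_k>0$), $c_k\to\infty$, and processes $X^k$ with $X^k\in\varepsilon_k\bigcup_{n\ge1}\mathcal{X}^n_1$ and $P[X^k_1\ge c_k]\ge\alpha$ for every $k$. (NAA1) means that no (AA1) exists. (NUPBR) means that $K^1_0$ is a bounded subset of $L^0$ (bounded in probability). *)

theory Defs
  imports "HOL-Probability.Probability"
begin

text \<open>Processes on the time interval [0,1] are modelled as functions
  real => 'a => real (values outside [0,1] are irrelevant).
  M is the probability space (Omega, F, P), Fl the filtration.\<close>

type_synonym 'a proc = "real \<Rightarrow> 'a \<Rightarrow> real"

definition usual_filtration :: "'a measure \<Rightarrow> (real \<Rightarrow> 'a measure) \<Rightarrow> bool" where
  "usual_filtration M Fl \<longleftrightarrow>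
     prob_space M \<and>
     (\<forall>t\<in>{0..1}. space (Fl t) = space M \<and> sets (Fl t) \<subseteq> sets M) \<and>
     (\<forall>s t. 0 \<le> s \<longrightarrow> s \<le> t \<longrightarrow> t \<le> 1 \<longrightarrow> sets (Fl s) \<subseteq> sets (Fl t)) \<and>
     \<comment> \<open>completeness of (Omega, F, P)\<close>
     (\<forall>A\<in>sets M. emeasure M A = 0 \<longrightarrow> (\<forall>B. B \<subseteq> A \<longrightarrow> B \<in> sets M)) \<and>
     \<comment> \<open>F_0 contains all P-null sets\<close>
     (\<forall>A\<in>sets M. emeasure M A = 0 \<longrightarrow> A \<in> sets (Fl 0)) \<and>
     \<comment> \<open>right-continuity\<close>
     (\<forall>t\<in>{0..<1}. sets (Fl t) = (\<Inter>s\<in>{t<..1}. sets (Fl s)))"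

definition adapted :: "'a measure \<Rightarrow> (real \<Rightarrow> 'a measure) \<Rightarrow> 'a proc \<Rightarrow> bool" where
  "adapted M Fl X \<longleftrightarrow> (\<forall>t\<in>{0..1}. X t \<in> borel_measurable (Fl t))"

definition cadlag :: "'a measure \<Rightarrow> 'a proc \<Rightarrow> bool" where
  "cadlag M X \<longleftrightarrow> (\<forall>\<omega>\<in>space M.
     (\<forall>t\<in>{0..<1}. ((\<lambda>s. X s \<omega>) \<longlongrightarrow> X t \<omega>) (at_right t)) \<and>
     (\<forall>t\<in>{0<..1}. \<exists>l. ((\<lambda>s. X s \<omega>) \<longlongrightarrow> l) (at_left t)))"

definition indist :: "'a measure \<Rightarrow> 'a proc \<Rightarrow> 'a proc \<Rightarrow> bool" where
  "indist M X Y \<longleftrightarrow> (AE \<omega> in M. \<forall>t\<in>{0..1}. X t \<omega> = Y t \<omega>)"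

definition bounded_L0 :: "'a measure \<Rightarrow> ('a \<Rightarrow> real) set \<Rightarrow> bool" where
  "bounded_L0 M K \<longleftrightarrow>
     (\<forall>e>0. \<exists>c. \<forall>f\<in>K. measure M {\<omega>\<in>space M. c < \<bar>f \<omega>\<bar>} \<le> e)"

definition simple_data ::
  "'a measure \<Rightarrow> (real \<Rightarrow> 'a measure) \<Rightarrow> nat \<Rightarrow> (nat \<Rightarrow> real) \<Rightarrow> (nat \<Rightarrow> 'a \<Rightarrow> real) \<Rightarrow> bool" where
  "simple_data M Fl n t h \<longleftrightarrow>
     0 \<le> t 0 \<and> t n \<le> 1 \<and> (\<forall>i<n. t i \<le> t (Suc i)) \<and>
     (\<forall>i<n. h i \<in> borel_measurable (Fl (t i)) \<and> (\<exists>C. \<forall>\<omega>\<in>space M. \<bar>h i \<omega>\<bar> \<le> C))"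

definition simple_proc ::
  "nat \<Rightarrow> (nat \<Rightarrow> real) \<Rightarrow> (nat \<Rightarrow> 'a \<Rightarrow> real) \<Rightarrow> ('a \<Rightarrow> real) \<Rightarrow> 'a proc" where
  "simple_proc n t h h0 = (\<lambda>s \<omega>. h0 \<omega> * indicator {0} s +
      (\<Sum>i<n. h i \<omega> * indicator {t i<..t (Suc i)} s))"

definition elem_int ::
  "nat \<Rightarrow> (nat \<Rightarrow> real) \<Rightarrow> (nat \<Rightarrow> 'a \<Rightarrow> real) \<Rightarrow> 'a proc \<Rightarrow> 'a proc" where
  "elem_int n t h X = (\<lambda>s \<omega>. \<Sum>i<n. h i \<omega> * (X (min (t (Suc i)) s) \<omega> - X (min (t i) s) \<omega>))"

text \<open>Semimartingales starting at 0 (good-integrator definition, Protter):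
  cadlag adapted processes with X_0 = 0 such that the elementary integrals of
  simple predictable integrands bounded by 1 form an L^0-bounded set.\<close>
definition semimart :: "'a measure \<Rightarrow> (real \<Rightarrow> 'a measure) \<Rightarrow> 'a proc \<Rightarrow> bool" where
  "semimart M Fl X \<longleftrightarrow> cadlag M X \<and> adapted M Fl X \<and> (\<forall>\<omega>\<in>space M. X 0 \<omega> = 0) \<and>
     bounded_L0 M {elem_int n t h X 1 | n t h.
        simple_data M Fl n t h \<and> (\<forall>i<n. \<forall>\<omega>\<in>space M. \<bar>h i \<omega>\<bar> \<le> 1)}"

definition semimarts :: "'a measure \<Rightarrow> (real \<Rightarrow> 'a measure) \<Rightarrow> 'a proc set" where
  "semimarts M Fl = {X. semimart M Fl X}"

definition emery_dist :: "'a measure \<Rightarrow> (real \<Rightarrow> 'a measure) \<Rightarrow> 'a proc \<Rightarrow> 'a proc \<Rightarrow> real" where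
  "emery_dist M Fl X Y =
     (SUP K \<in> {(n, t, h). simple_data M Fl n t h \<and> (\<forall>i<n. \<forall>\<omega>\<in>space M. \<bar>h i \<omega>\<bar> \<le> 1)}.
        (case K of (n, t, h) \<Rightarrow>
          integral\<^sup>L M (\<lambda>\<omega>. SUP s\<in>{0..1}.
             min \<bar>elem_int n t h (\<lambda>r \<omega>'. X r \<omega>' - Y r \<omega>') s \<omega>\<bar> 1)))"

definition emery_closure :: "'a measure \<Rightarrow> (real \<Rightarrow> 'a measure) \<Rightarrow> 'a proc set \<Rightarrow> 'a proc set" where
  "emery_closure M Fl U =
     {X \<in> semimarts M Fl. \<forall>e>0. \<exists>Y\<in>U. emery_dist M Fl X Y < e}"

definition pred_sigma :: "'a measure \<Rightarrow> (real \<Rightarrow> 'a measure) \<Rightarrow> (real \<times> 'a) measure" where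
  "pred_sigma M Fl = sigma ({0..1} \<times> space M)
     ({{0} \<times> A | A. A \<in> sets (Fl 0)} \<union>
      {{s<..t} \<times> A | s t A. 0 \<le> s \<and> s \<le> t \<and> t \<le> 1 \<and> A \<in> sets (Fl s)})"

definition bdd_pred :: "'a measure \<Rightarrow> (real \<Rightarrow> 'a measure) \<Rightarrow> 'a proc \<Rightarrow> bool" where
  "bdd_pred M Fl H \<longleftrightarrow> (\<lambda>(s, \<omega>). H s \<omega>) \<in> borel_measurable (pred_sigma M Fl) \<and>
     (\<exists>C. \<forall>s\<in>{0..1}. \<forall>\<omega>\<in>space M. \<bar>H s \<omega>\<bar> \<le> C)"

text \<open>ucp distance (metrizes uniform convergence on [0,1] in probability).\<close>
definition ucp_dist :: "'a measure \<Rightarrow> 'a proc \<Rightarrow> 'a proc \<Rightarrow> real" where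
  "ucp_dist M X Y = integral\<^sup>L M (\<lambda>\<omega>. SUP s\<in>{0..1}. min \<bar>X s \<omega> - Y s \<omega>\<bar> 1)"

text \<open>By the monotone class theorem such a map is unique up to indistinguishability,
  and for semimartingales it exists.  stoch_int M Fl X H Z means that Z is a
  (cadlag adapted, null at 0) version of H . X.\<close>
definition int_map :: "'a measure \<Rightarrow> (real \<Rightarrow> 'a measure) \<Rightarrow> 'a proc \<Rightarrow> ('a proc \<Rightarrow> 'a proc) \<Rightarrow> bool" where
  "int_map M Fl X I \<longleftrightarrow>
     (\<forall>H. bdd_pred M Fl H \<longrightarrow> cadlag M (I H) \<and> adapted M Fl (I H)) \<and>
     (\<forall>n t h h0. simple_data M Fl n t h \<longrightarrow> h0 \<in> borel_measurable (Fl 0) \<longrightarrow>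
         (\<exists>C. \<forall>\<omega>\<in>space M. \<bar>h0 \<omega>\<bar> \<le> C) \<longrightarrow>
         indist M (I (simple_proc n t h h0)) (elem_int n t h X)) \<and>
     (\<forall>a b H G. bdd_pred M Fl H \<longrightarrow> bdd_pred M Fl G \<longrightarrow>
         indist M (I (\<lambda>s \<omega>. a * H s \<omega> + b * G s \<omega>)) (\<lambda>s \<omega>. a * I H s \<omega> + b * I G s \<omega>)) \<and>
     (\<forall>Hs H. (\<forall>k. bdd_pred M Fl (Hs k)) \<longrightarrow> bdd_pred M Fl H \<longrightarrow>
         (\<exists>C. \<forall>k. \<forall>s\<in>{0..1}. \<forall>\<omega>\<in>space M. \<bar>Hs k s \<omega>\<bar> \<le> C) \<longrightarrow>
         (\<forall>s\<in>{0..1}. \<forall>\<omega>\<in>space M. (\<lambda>k. Hs k s \<omega>) \<longlonglongrightarrow> H s \<omega>) \<longrightarrow>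
         (\<lambda>k. ucp_dist M (I (Hs k)) (I H)) \<longlonglongrightarrow> 0)"

definition stoch_int :: "'a measure \<Rightarrow> (real \<Rightarrow> 'a measure) \<Rightarrow> 'a proc \<Rightarrow> 'a proc \<Rightarrow> 'a proc \<Rightarrow> bool" where
  "stoch_int M Fl X H Z \<longleftrightarrow> cadlag M Z \<and> adapted M Fl Z \<and> (\<forall>\<omega>\<in>space M. Z 0 \<omega> = 0) \<and>
     (\<exists>I. int_map M Fl X I \<and> indist M (I H) Z)"

definition market_setting ::
  "'a measure \<Rightarrow> (real \<Rightarrow> 'a measure) \<Rightarrow> real set \<Rightarrow> (nat \<Rightarrow> real set set)
     \<Rightarrow> (real set \<Rightarrow> 'a proc set) \<Rightarrow> bool" where
  "market_setting M Fl I \<A> \<X> \<longleftrightarrow>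
     usual_filtration M Fl \<and> I \<subseteq> {0..} \<and>
     (\<forall>n\<ge>1. \<forall>A\<in>\<A> n. A \<subseteq> I \<and> finite A \<and> card A = n) \<and>
     (\<forall>A1\<in>(\<Union>n\<in>{1..}. \<A> n). \<forall>A2\<in>(\<Union>n\<in>{1..}. \<A> n). A1 \<union> A2 \<in> (\<Union>n\<in>{1..}. \<A> n)) \<and>
     (\<forall>A\<in>(\<Union>n\<in>{1..}. \<A> n).
        \<X> A \<subseteq> semimarts M Fl \<and>
        (\<forall>X\<in>\<X> A. \<forall>t\<in>{0..1}. \<forall>\<omega>\<in>space M. X t \<omega> \<ge> -1) \<and>
        (\<forall>X\<in>\<X> A. \<forall>Y\<in>\<X> A. \<forall>u\<in>{0..1::real}.
            (\<lambda>t \<omega>. u * X t \<omega> + (1 - u) * Y t \<omega>) \<in> \<X> A) \<and>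
        (\<forall>H G X Y Z1 Z2. bdd_pred M Fl H \<longrightarrow> bdd_pred M Fl G \<longrightarrow>
            (\<forall>s\<in>{0..1}. \<forall>\<omega>\<in>space M. H s \<omega> \<ge> 0 \<and> G s \<omega> \<ge> 0 \<and> H s \<omega> * G s \<omega> = 0) \<longrightarrow>
            X \<in> \<X> A \<longrightarrow> Y \<in> \<X> A \<longrightarrow>
            stoch_int M Fl X H Z1 \<longrightarrow> stoch_int M Fl Y G Z2 \<longrightarrow>
            (\<forall>t\<in>{0..1}. \<forall>\<omega>\<in>space M. Z1 t \<omega> + Z2 t \<omega> \<ge> -1) \<longrightarrow>
            (\<lambda>t \<omega>. Z1 t \<omega> + Z2 t \<omega>) \<in> \<X> A)) \<and>
     (\<forall>A1\<in>(\<Union>n\<in>{1..}. \<A> n). \<forall>A2\<in>(\<Union>n\<in>{1..}. \<A> n). A1 \<subseteq> A2 \<longrightarrow> \<X> A1 \<subseteq> \<X> A2)"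

definition Xn :: "(nat \<Rightarrow> real set set) \<Rightarrow> (real set \<Rightarrow> 'a proc set) \<Rightarrow> nat \<Rightarrow> 'a proc set" where
  "Xn \<A> \<X> n = (\<Union>A\<in>\<A> n. \<X> A)"

definition X1 :: "'a measure \<Rightarrow> (real \<Rightarrow> 'a measure) \<Rightarrow> (nat \<Rightarrow> real set set)
     \<Rightarrow> (real set \<Rightarrow> 'a proc set) \<Rightarrow> 'a proc set" where
  "X1 M Fl \<A> \<X> = emery_closure M Fl (\<Union>n\<in>{1..}. Xn \<A> \<X> n)"

definition K10 :: "'a measure \<Rightarrow> (real \<Rightarrow> 'a measure) \<Rightarrow> (nat \<Rightarrow> real set set)
     \<Rightarrow> (real set \<Rightarrow> 'a proc set) \<Rightarrow> ('a \<Rightarrow> real) set" where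
  "K10 M Fl \<A> \<X> = (\<lambda>X. X 1) ` X1 M Fl \<A> \<X>"

definition AA1 :: "'a measure \<Rightarrow> (nat \<Rightarrow> real set set) \<Rightarrow> (real set \<Rightarrow> 'a proc set) \<Rightarrow> bool" where
  "AA1 M \<A> \<X> \<longleftrightarrow> (\<exists>\<alpha>>0. \<exists>\<epsilon> c Xs.
     (\<forall>k. \<epsilon> k > (0::real)) \<and> \<epsilon> \<longlonglongrightarrow> 0 \<and> filterlim (c :: nat \<Rightarrow> real) at_top sequentially \<and>
     (\<forall>k. \<exists>Y\<in>(\<Union>n\<in>{1..}. Xn \<A> \<X> n). Xs k = (\<lambda>t \<omega>. \<epsilon> k * Y t \<omega>)) \<and>
     (\<forall>k. measure M {\<omega>\<in>space M. Xs k 1 \<omega> \<ge> c k} \<ge> \<alpha>))"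

definition NAA1 :: "'a measure \<Rightarrow> (nat \<Rightarrow> real set set) \<Rightarrow> (real set \<Rightarrow> 'a proc set) \<Rightarrow> bool" where
  "NAA1 M \<A> \<X> \<longleftrightarrow> \<not> AA1 M \<A> \<X>"

definition NUPBR :: "'a measure \<Rightarrow> (real \<Rightarrow> 'a measure) \<Rightarrow> (nat \<Rightarrow> real set set)
     \<Rightarrow> (real set \<Rightarrow> 'a proc set) \<Rightarrow> bool" where
  "NUPBR M Fl \<A> \<X> \<longleftrightarrow> bounded_L0 M (K10 M Fl \<A> \<X>)"

end

theory Submission
  imports Defs
begin

lemma meas_sm:
  assumes uf: "usual_filtration M Fl" and sm: "semimart M Fl X" and t: "t \<in> {0..1}"
  shows "X t \<in> borel_measurable M"
proof -
  have "X t \<in> borel_measurable (Fl t)" using sm t unfolding semimart_def adapted_def by auto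
  moreover have "sets (Fl t) \<subseteq> sets M" "space (Fl t) = space M" using uf t unfolding usual_filtration_def by auto
  ultimately show ?thesis using measurable_mono[of borel borel "Fl t" M] by auto
qed

lemma sup_rat:
  fixes f :: "real \<Rightarrow> real"
  assumes rc: "\<forall>t\<in>{0..<1}. (f \<longlongrightarrow> f t) (at_right t)"
    and bd: "\<And>s. f s \<le> 1"
  shows "(SUP s\<in>{0..1}. f s) = (SUP s\<in>(\<rat> \<inter> {0..<1}) \<union> {1}. f s)"
proof (rule antisym)
  let ?D = "(\<rat> \<inter> {0..<1}) \<union> {1::real}"
  have bdD: "bdd_above (f ` ?D)" using bd by (intro bdd_aboveI[where M=1]) auto
  show "(SUP s\<in>{0..1}. f s) \<le> (SUP s\<in>?D. f s)"
  proof (rule cSUP_least)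
    show "{0..1::real} \<noteq> {}" by simp
    fix s :: real assume s: "s \<in> {0..1}"
    show "f s \<le> (SUP s\<in>?D. f s)"
    proof (cases "s = 1")
      case True then show ?thesis by (intro cSUP_upper[OF _ bdD]) simp
    next
      case False
      with s have s1: "s \<in> {0..<1}" by auto
      show ?thesis
      proof (rule ccontr)
        assume "\<not> ?thesis"
        then have lt: "(SUP s\<in>?D. f s) < f s" by simp
        have "eventually (\<lambda>u. (SUP s\<in>?D. f s) < f u) (at_right s)"
          using order_tendstoD(1)[OF rc[rule_format, OF s1] lt] .
        then obtain b where b: "b > s" "\<And>y. y > s \<Longrightarrow> y < b \<Longrightarrow> (SUP s\<in>?D. f s) < f y"
          unfolding eventually_at_right_field by auto
        have "s < min b 1" using b s1 by auto
        then obtain q where q: "q \<in> \<rat>" "s < q" "q < min b 1" using Rats_dense_in_real by blast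
        have "q \<in> ?D" using q s1 by auto
        then have "f q \<le> (SUP s\<in>?D. f s)" by (rule cSUP_upper[OF _ bdD])
        moreover have "(SUP s\<in>?D. f s) < f q" using b q by auto
        ultimately show False by simp
      qed
    qed
  qed
  show "(SUP s\<in>?D. f s) \<le> (SUP s\<in>{0..1}. f s)"
    by (rule cSUP_subset_mono) (use bd in \<open>auto intro!: bdd_aboveI[where M=1]\<close>)
qed

lemma int_le1:
  assumes "prob_space M" and "\<And>x. f x \<le> (1::real)"
  shows "integral\<^sup>L M f \<le> 1"
proof (rule integral_real_bounded)
  have "integral\<^sup>N M f \<le> integral\<^sup>N M (\<lambda>_. 1)"
    by (rule nn_integral_mono) (use assms(2) in \<open>simp add: ennreal_leI\<close>)
  also have "\<dots> = 1" using assms(1) by (simp add: prob_space.emeasure_space_1)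
  finally show "integral\<^sup>N M f \<le> ennreal 1" by simp
qed simp

lemma sup_le1: "(SUP s\<in>{0..1::real}. min (g s) (1::real)) \<le> 1"
  by (rule cSUP_least) auto

lemma emery_bound:
  assumes uf: "usual_filtration M Fl" and X: "semimart M Fl X" and Y: "semimart M Fl Y"
  shows "measure M {\<omega>\<in>space M. 1 \<le> \<bar>X 1 \<omega> - Y 1 \<omega>\<bar>} \<le> emery_dist M Fl X Y"
proof -
  have ps: "prob_space M" using uf unfolding usual_filtration_def by auto
  then interpret prob_space M .
  define t0 :: "nat \<Rightarrow> real" where "t0 = (\<lambda>i. if i = 0 then 0 else 1)"
  define h0 :: "nat \<Rightarrow> 'a \<Rightarrow> real" where "h0 = (\<lambda>i \<omega>. 1)"
  let ?S = "{(n, t, h). simple_data M Fl n t h \<and> (\<forall>i<n. \<forall>\<omega>\<in>space M. \<bar>h i \<omega>\<bar> \<le> 1)}"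
  let ?F = "\<lambda>K. (case K of (n, t, h) \<Rightarrow>
          integral\<^sup>L M (\<lambda>\<omega>. SUP s\<in>{0..1}.
             min \<bar>elem_int n t h (\<lambda>r \<omega>'. X r \<omega>' - Y r \<omega>') s \<omega>\<bar> 1))"
  have K0: "(1::nat, t0, h0) \<in> ?S"
    unfolding simple_data_def t0_def h0_def by auto
  have bdS: "bdd_above (?F ` ?S)"
    by (rule bdd_aboveI[where M=1]) (auto intro!: int_le1[OF ps] sup_le1)
  define g where "g = (\<lambda>\<omega>. SUP s\<in>{0..1::real}.
             min \<bar>elem_int 1 t0 h0 (\<lambda>r \<omega>'. X r \<omega>' - Y r \<omega>') s \<omega>\<bar> (1::real))"
  have ge: "integral\<^sup>L M g \<le> emery_dist M Fl X Y"
    unfolding emery_dist_def g_def using cSUP_upper[OF K0 bdS] by simp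
  let ?D = "(\<rat> \<inter> {0..<1}) \<union> {1::real}"
  have ei: "elem_int 1 t0 h0 (\<lambda>r \<omega>'. X r \<omega>' - Y r \<omega>') s \<omega> = X s \<omega> - Y s \<omega>"
    if "\<omega> \<in> space M" "s \<in> {0..1}" for \<omega> s
    using that X Y unfolding elem_int_def t0_def h0_def semimart_def by auto
  have geq: "g \<omega> = (SUP s\<in>?D. min \<bar>X s \<omega> - Y s \<omega>\<bar> 1)" if w: "\<omega> \<in> space M" for \<omega>
  proof -
    have "g \<omega> = (SUP s\<in>{0..1}. min \<bar>X s \<omega> - Y s \<omega>\<bar> 1)"
      unfolding g_def using ei[OF w] by (intro SUP_cong) auto
    also have "\<dots> = (SUP s\<in>?D. min \<bar>X s \<omega> - Y s \<omega>\<bar> 1)"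
    proof (rule sup_rat)
      show "\<forall>t\<in>{0..<1}. ((\<lambda>s. min \<bar>X s \<omega> - Y s \<omega>\<bar> 1) \<longlongrightarrow> min \<bar>X t \<omega> - Y t \<omega>\<bar> 1) (at_right t)"
      proof
        fix t :: real assume t: "t \<in> {0..<1}"
        have "((\<lambda>s. X s \<omega>) \<longlongrightarrow> X t \<omega>) (at_right t)" "((\<lambda>s. Y s \<omega>) \<longlongrightarrow> Y t \<omega>) (at_right t)"
          using X Y w t unfolding semimart_def cadlag_def by auto
        then show "((\<lambda>s. min \<bar>X s \<omega> - Y s \<omega>\<bar> 1) \<longlongrightarrow> min \<bar>X t \<omega> - Y t \<omega>\<bar> 1) (at_right t)"
          by (intro tendsto_intros)
      qed
    qed simp
    finally show ?thesis .
  qed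
  have Dsub: "?D \<subseteq> {0..1}" by auto
  have gm: "g \<in> borel_measurable M"
  proof (rule measurable_cong[THEN iffD2])
    show "\<And>w. w \<in> space M \<Longrightarrow> g w = (SUP s\<in>?D. min \<bar>X s w - Y s w\<bar> 1)" using geq .
    have [measurable]: "\<And>s. s \<in> ?D \<Longrightarrow> X s \<in> borel_measurable M"
      "\<And>s. s \<in> ?D \<Longrightarrow> Y s \<in> borel_measurable M"
      using meas_sm[OF uf X] meas_sm[OF uf Y] Dsub by auto
    show "(\<lambda>w. SUP s\<in>?D. min \<bar>X s w - Y s w\<bar> 1) \<in> borel_measurable M"
    proof (rule borel_measurable_cSUP)
      show "countable ?D" using countable_rat by auto
      show "\<And>x. x \<in> space M \<Longrightarrow> bdd_above ((\<lambda>i. min \<bar>X i x - Y i x\<bar> 1) ` ?D)"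
        by (rule bdd_aboveI[where M=1]) auto
    qed measurable
  qed
  have g0: "0 \<le> g \<omega>" for \<omega>
  proof -
    have "min \<bar>elem_int 1 t0 h0 (\<lambda>r \<omega>'. X r \<omega>' - Y r \<omega>') 0 \<omega>\<bar> 1 \<le> g \<omega>"
      unfolding g_def by (rule cSUP_upper) (auto intro!: bdd_aboveI[where M=1])
    then show ?thesis by linarith
  qed
  have g1: "g \<omega> \<le> 1" for \<omega> unfolding g_def by (rule sup_le1)
  have gi: "integrable M g"
    by (rule integrable_const_bound[where B=1]) (use g0 g1 gm in auto)
  have X1: "X 1 \<in> borel_measurable M" and Y1: "Y 1 \<in> borel_measurable M"
    using meas_sm[OF uf X] meas_sm[OF uf Y] by auto
  let ?A = "{\<omega>\<in>space M. 1 \<le> \<bar>X 1 \<omega> - Y 1 \<omega>\<bar>}"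
  have Am: "?A \<in> sets M" using X1 Y1 by measurable
  have mi: "integrable M (\<lambda>\<omega>. min \<bar>X 1 \<omega> - Y 1 \<omega>\<bar> 1)"
    by (rule integrable_const_bound[where B=1]) (use X1 Y1 in auto)
  have "measure M ?A = integral\<^sup>L M (indicator ?A)" using Am by simp
  also have "\<dots> \<le> integral\<^sup>L M (\<lambda>\<omega>. min \<bar>X 1 \<omega> - Y 1 \<omega>\<bar> 1)"
    by (rule integral_mono[OF _ mi]) (auto intro!: integrable_real_indicator Am simp: emeasure_eq_measure split: split_indicator)
  also have "\<dots> \<le> integral\<^sup>L M g"
  proof (rule integral_mono[OF mi gi])
    fix \<omega> assume w: "\<omega> \<in> space M"
    have "min \<bar>elem_int 1 t0 h0 (\<lambda>r \<omega>'. X r \<omega>' - Y r \<omega>') 1 \<omega>\<bar> 1 \<le> g \<omega>"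
      unfolding g_def by (rule cSUP_upper) (auto intro!: bdd_aboveI[where M=1])
    then show "min \<bar>X 1 \<omega> - Y 1 \<omega>\<bar> 1 \<le> g \<omega>" using ei[OF w, of 1] by simp
  qed
  also have "\<dots> \<le> emery_dist M Fl X Y" by (rule ge)
  finally show ?thesis .
qed

lemma self_X1:
  assumes Y: "semimart M Fl Y" and YU: "Y \<in> U"
  shows "Y \<in> emery_closure M Fl U"
proof -
  let ?S = "{(n, t, h). simple_data M Fl n t h \<and> (\<forall>i<n. \<forall>\<omega>\<in>space M. \<bar>h i \<omega>\<bar> \<le> 1)}"
  have ne: "((0::nat), (\<lambda>_. 0::real), (\<lambda>_ _. 0::real)) \<in> ?S" unfolding simple_data_def by auto
  have "emery_dist M Fl Y Y = (SUP K\<in>?S. (0::real))"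
    unfolding emery_dist_def elem_int_def by (intro SUP_cong) auto
  also have "\<dots> = 0" using ne by (subst cSUP_const) auto
  finally have d0: "emery_dist M Fl Y Y = 0" .
  show ?thesis unfolding emery_closure_def semimarts_def using Y YU d0 by (auto intro!: bexI[of _ Y])
qed

lemma l1: "0 < (a::real) \<Longrightarrow> (x \<le> inverse a * y) = (x*a \<le> y)"
  by (simp add: field_simps)
lemma l2: "\<bar>x - y\<bar> < 1 \<Longrightarrow> (c::real) < \<bar>x\<bar> \<Longrightarrow> y \<ge> -1 \<Longrightarrow> (d::real) \<ge> 0 \<Longrightarrow> c = d + 3 \<Longrightarrow> d \<le> y"
  by linarith
lemma l3: assumes "\<And>k::nat. \<exists>Y\<in>U. P k Y" obtains Yk where "\<And>k. Yk k \<in> U" "\<And>k. P k (Yk k)"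
  using assms by metis

theorem proposition4p3:
  fixes M :: "'a measure" and Fl :: "real \<Rightarrow> 'a measure"
    and I :: "real set" and \<A> :: "nat \<Rightarrow> real set set" and \<X> :: "real set \<Rightarrow> 'a proc set"
  assumes "market_setting M Fl I \<A> \<X>"
  shows "NAA1 M \<A> \<X> \<longleftrightarrow> NUPBR M Fl \<A> \<X>"
proof -
  let ?U = "\<Union>n\<in>{1..}. Xn \<A> \<X> n"
  have uf: "usual_filtration M Fl" using assms unfolding market_setting_def by auto
  have ps: "prob_space M" using uf unfolding usual_filtration_def by auto
  interpret prob_space M by (rule ps)
  have Uprop: "semimart M Fl Y \<and> (\<forall>t\<in>{0..1}. \<forall>\<omega>\<in>space M. Y t \<omega> \<ge> -1)" if "Y \<in> ?U" for Y
  proof -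
    from that obtain n A where "n \<ge> 1" "A \<in> \<A> n" "Y \<in> \<X> A" unfolding Xn_def by auto
    then show ?thesis using assms unfolding market_setting_def semimarts_def by blast
  qed
  have UX1: "Y \<in> X1 M Fl \<A> \<X>" if "Y \<in> ?U" for Y
    unfolding X1_def using self_X1[OF conjunct1[OF Uprop[OF that]] that] .
  show ?thesis
  proof
    assume naa: "NAA1 M \<A> \<X>"
    show "NUPBR M Fl \<A> \<X>"
    proof (rule ccontr)
      assume "\<not> NUPBR M Fl \<A> \<X>"
      then obtain e where e: "e > 0" and ce: "\<And>c. \<exists>f\<in>K10 M Fl \<A> \<X>. measure M {\<omega>\<in>space M. c < \<bar>f \<omega>\<bar>} > e"
        unfolding NUPBR_def bounded_L0_def by (auto simp: not_le)
      have claim: "\<exists>Y\<in>?U. measure M {\<omega>\<in>space M. real k * real (Suc k) \<le> Y 1 \<omega>} \<ge> e/2" for k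
      proof -
        define c where "c = real k * real (Suc k) + 3"
        obtain X where X: "X \<in> X1 M Fl \<A> \<X>" and mX: "measure M {\<omega>\<in>space M. c < \<bar>X 1 \<omega>\<bar>} > e"
          using ce[of c] unfolding K10_def by auto
        have Xs: "semimart M Fl X" and "\<forall>d>0. \<exists>Y\<in>?U. emery_dist M Fl X Y < d"
          using X unfolding X1_def emery_closure_def semimarts_def by auto
        then obtain Y where YU: "Y \<in> ?U" and dY: "emery_dist M Fl X Y < e/2" using e by (meson half_gt_zero)
        have Ys: "semimart M Fl Y" and Yge: "\<And>\<omega>. \<omega> \<in> space M \<Longrightarrow> Y 1 \<omega> \<ge> -1" using Uprop[OF YU] by auto
        have X1m: "X 1 \<in> borel_measurable M" and Y1m: "Y 1 \<in> borel_measurable M"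
          using meas_sm[OF uf Xs] meas_sm[OF uf Ys] by auto
        let ?A = "{\<omega>\<in>space M. c < \<bar>X 1 \<omega>\<bar>}"
        let ?B = "{\<omega>\<in>space M. real k * real (Suc k) \<le> Y 1 \<omega>}"
        let ?C = "{\<omega>\<in>space M. 1 \<le> \<bar>X 1 \<omega> - Y 1 \<omega>\<bar>}"
        have Bm: "?B \<in> sets M" using X1m Y1m by measurable
        have Cm: "?C \<in> sets M" using X1m Y1m by measurable
        have sub: "?A \<subseteq> ?B \<union> ?C"
        proof
          fix \<omega> assume w: "\<omega> \<in> ?A"
          show "\<omega> \<in> ?B \<union> ?C"
          proof (cases "\<omega> \<in> ?C")
            case False
            then have "\<bar>X 1 \<omega> - Y 1 \<omega>\<bar> < 1" using w by auto
            moreover have "Y 1 \<omega> \<ge> -1" using Yge w by auto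
            moreover have "real k * real (Suc k) \<ge> 0" by simp
            moreover have "c < \<bar>X 1 \<omega>\<bar>" using w by simp
            ultimately have "real k * real (Suc k) \<le> Y 1 \<omega>" using l2[of "X 1 \<omega>" "Y 1 \<omega>" c "real k * real (Suc k)"] c_def by simp
            then show ?thesis using w by blast
          qed simp
        qed
        have mC: "measure M ?C \<le> emery_dist M Fl X Y" by (rule emery_bound[OF uf Xs Ys])
        have "e < measure M ?A" by (rule mX)
        also have "\<dots> \<le> measure M (?B \<union> ?C)" by (rule finite_measure_mono[OF sub]) (use Bm Cm in auto)
        also have "\<dots> \<le> measure M ?B + measure M ?C" by (rule measure_subadditive[OF Bm Cm]) (simp_all add: emeasure_eq_measure)
        finally have "e/2 \<le> measure M ?B" using dY mC by linarith
        then show ?thesis using YU by blast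
      qed
      obtain Yk where Yk: "\<And>k. Yk k \<in> ?U"
        "\<And>k. measure M {\<omega>\<in>space M. real k * real (Suc k) \<le> Yk k 1 \<omega>} \<ge> e/2"
        by (rule l3[of ?U "\<lambda>k Y. e/2 \<le> measure M {\<omega>\<in>space M. real k * real (Suc k) \<le> Y 1 \<omega>}", OF claim]) blast
      have m2: "measure M {\<omega>\<in>space M. (\<lambda>t \<omega>. inverse (real (Suc k)) * Yk k t \<omega>) 1 \<omega> \<ge> real k} \<ge> e/2" for k
      proof -
        have "{\<omega>\<in>space M. (\<lambda>t \<omega>. inverse (real (Suc k)) * Yk k t \<omega>) 1 \<omega> \<ge> real k}
            = {\<omega>\<in>space M. real k * real (Suc k) \<le> Yk k 1 \<omega>}"
          using l1[of "real (Suc k)" "real k"] by simp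
        then show ?thesis using Yk(2)[of k] by simp
      qed
      have l4: "(\<lambda>k. inverse (real (Suc k))) \<longlonglongrightarrow> 0" by (rule LIMSEQ_inverse_real_of_nat)
      have l5: "filterlim (\<lambda>k. real k) at_top sequentially" by (rule filterlim_real_sequentially)
      have l6: "\<forall>k. \<exists>Y\<in>?U. (\<lambda>t \<omega>. inverse (real (Suc k)) * Yk k t \<omega>) = (\<lambda>t \<omega>. inverse (real (Suc k)) * Y t \<omega>)"
        using Yk(1) by blast
      have "AA1 M \<A> \<X>"
        unfolding AA1_def
        apply (rule exI[where x="e/2"])
        apply (rule conjI)
         apply (simp add: e)
        apply (rule exI[where x="\<lambda>k. inverse (real (Suc k))"])
        apply (rule exI[where x="\<lambda>k. real k"])
        apply (rule exI[where x="\<lambda>k t \<omega>. inverse (real (Suc k)) * Yk k t \<omega>"])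
        apply (intro conjI)
            apply simp
           apply (rule l4)
          apply (rule l5)
         apply (rule l6)
        using m2 by blast
      then show False using naa unfolding NAA1_def by simp
    qed
  next
    assume nu: "NUPBR M Fl \<A> \<X>"
    show "NAA1 M \<A> \<X>"
      unfolding NAA1_def
    proof
      assume "AA1 M \<A> \<X>"
      then obtain \<alpha> \<epsilon> c Xs where al: "\<alpha> > 0" and epos: "\<And>k. \<epsilon> k > (0::real)" and e0: "\<epsilon> \<longlonglongrightarrow> 0"
        and cinf: "filterlim (c :: nat \<Rightarrow> real) at_top sequentially"
        and Xs: "\<And>k. \<exists>Y\<in>?U. Xs k = (\<lambda>t \<omega>. \<epsilon> k * Y t \<omega>)"
        and mk: "\<And>k. measure M {\<omega>\<in>space M. Xs k 1 \<omega> \<ge> c k} \<ge> \<alpha>"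
        unfolding AA1_def by blast
      obtain c0 where c0: "\<And>f. f \<in> K10 M Fl \<A> \<X> \<Longrightarrow> measure M {\<omega>\<in>space M. c0 < \<bar>f \<omega>\<bar>} \<le> \<alpha>/2"
        using nu al unfolding NUPBR_def bounded_L0_def by (meson half_gt_zero)
      have ev1: "eventually (\<lambda>k. \<epsilon> k < 1) sequentially"
        using order_tendstoD(2)[OF e0] by simp
      have ev2: "eventually (\<lambda>k. c k > \<bar>c0\<bar>) sequentially"
        using cinf by (simp add: filterlim_at_top_dense)
      obtain k where k1: "\<epsilon> k < 1" and k2: "c k > \<bar>c0\<bar>"
        using eventually_happens'[OF _ eventually_conj[OF ev1 ev2]] by auto
      obtain Y where YU: "Y \<in> ?U" and XY: "Xs k = (\<lambda>t \<omega>. \<epsilon> k * Y t \<omega>)" using Xs by blast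
      have Ys: "semimart M Fl Y" using Uprop[OF YU] by auto
      have Y1m: "Y 1 \<in> borel_measurable M" using meas_sm[OF uf Ys] by auto
      have "Y 1 \<in> K10 M Fl \<A> \<X>" unfolding K10_def using UX1[OF YU] by auto
      then have le: "measure M {\<omega>\<in>space M. c0 < \<bar>Y 1 \<omega>\<bar>} \<le> \<alpha>/2" by (rule c0)
      have sub: "{\<omega>\<in>space M. Xs k 1 \<omega> \<ge> c k} \<subseteq> {\<omega>\<in>space M. c0 < \<bar>Y 1 \<omega>\<bar>}"
      proof
        fix \<omega> assume "\<omega> \<in> {\<omega>\<in>space M. Xs k 1 \<omega> \<ge> c k}"
        then have w: "\<omega> \<in> space M" and ge: "\<epsilon> k * Y 1 \<omega> \<ge> c k" using XY by auto
        have "\<epsilon> k * c0 \<le> \<epsilon> k * \<bar>c0\<bar>" using epos[of k] by (simp add: mult_left_mono)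
        also have "\<dots> \<le> \<bar>c0\<bar>" using k1 epos[of k] by (simp add: mult_left_le_one_le)
        finally have "\<epsilon> k * c0 < \<epsilon> k * Y 1 \<omega>" using k2 ge by linarith
        then have "c0 < Y 1 \<omega>" using epos[of k] by simp
        then show "\<omega> \<in> {\<omega>\<in>space M. c0 < \<bar>Y 1 \<omega>\<bar>}" using w by auto
      qed
      have "\<alpha> \<le> measure M {\<omega>\<in>space M. Xs k 1 \<omega> \<ge> c k}" by (rule mk)
      also have "\<dots> \<le> measure M {\<omega>\<in>space M. c0 < \<bar>Y 1 \<omega>\<bar>}"
        by (rule finite_measure_mono[OF sub]) (use Y1m in measurable)
      finally show False using le al by linarith
    qed
  qed
qed

end
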